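(* For any growth control function $g$ and any strictly increasing sequence of integers $(p_j)_{j\in\mathbb{N}_0}$ with $p_0=0$, there exists a weight sequence $\boldsymbol{M}=(M_p)_p$, with quotients $m_p=M_{p+1}/M_p$, such that (i) $m_p\le g(p)$ for all $p\in\mathbb{N}_0$, and (ii) $m_{p_j}=g(p_j)$ for all $j\in\mathbb{N}_0$.
   Context: A growth control function is a strictly increasing function $g\colon[0,\infty)\to[1,\infty)$ with $g(0)=1$ and $\lim_{t\to\infty}g(t)=\infty$. A weight sequence is a sequence $\boldsymbol{M}=(M_p)_{p\in\mathbb{N}_0}$ of positive reals with $M_0=1$, $M_p^2\le M_{p-1}M_{p+1}$ for $p\ge1$, and $m_p=M_{p+1}/M_p\to\infty$. *)

theory Defs
  imports Complex_Main
begin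

definition growth_control :: "(real \<Rightarrow> real) \<Rightarrow> bool" where
  "growth_control g \<longleftrightarrow>
     strict_mono_on {0..} g \<and> (\<forall>t\<ge>0. g t \<ge> 1) \<and> g 0 = 1 \<and>
     filterlim g at_top at_top"

definition weight_sequence :: "(nat \<Rightarrow> real) \<Rightarrow> bool" where
  "weight_sequence M \<longleftrightarrow>
     (\<forall>p. M p > 0) \<and> M 0 = 1 \<and>
     (\<forall>p\<ge>1. (M p)\<^sup>2 \<le> M (p - 1) * M (p + 1)) \<and>
     filterlim (\<lambda>p. M (Suc p) / M p) at_top sequentially"

end

theory Submission
  imports Defs
begin

theorem proposition4p8:
  fixes g :: "real \<Rightarrow> real" and pj :: "nat \<Rightarrow> nat"
  assumes "growth_control g" and "strict_mono pj" and "pj 0 = 0"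
  shows "\<exists>M. weight_sequence M \<and>
           (\<forall>p. M (Suc p) / M p \<le> g (real p)) \<and>
           (\<forall>j. M (Suc (pj j)) / M (pj j) = g (real (pj j)))"
proof -
  have smono: "strict_mono_on {0..} g" and g1: "\<And>t. t \<ge> 0 \<Longrightarrow> g t \<ge> 1"
    and glim: "filterlim g at_top at_top"
    using assms(1) unfolding growth_control_def by auto
  have gmono: "g a \<le> g b" if "0 \<le> a" "a \<le> b" for a b
  proof (cases "a = b")
    case False
    then have "a < b" using that by auto
    then have "g a < g b" using smono that unfolding strict_mono_on_def by auto
    then show ?thesis by simp
  qed simp
  define S where "S p = {k \<in> range pj. k \<le> p}" for p
  define q where "q p = Max (S p)" for p
  have Sfin: "finite (S p)" for p unfolding S_def by (rule finite_subset[of _ "{..p}"]) auto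
  have Sne: "0 \<in> S p" for p unfolding S_def using assms(3) by (auto intro: range_eqI[of 0 pj 0])
  have qS: "q p \<in> S p" for p unfolding q_def using Sfin Sne by (intro Max_in) auto
  have qle: "q p \<le> p" for p using qS[of p] unfolding S_def by auto
  have qmono: "q a \<le> q b" if "a \<le> b" for a b
  proof -
    have "q a \<in> S a" by (rule qS)
    then have "q a \<in> S b" using that unfolding S_def by auto
    then show ?thesis unfolding q_def using Sfin by auto
  qed
  have qpj: "q (pj j) = pj j" for j
  proof -
    have "pj j \<in> S (pj j)" unfolding S_def by auto
    then have "pj j \<le> q (pj j)" unfolding q_def using Sfin by auto
    then show ?thesis using qle[of "pj j"] by auto
  qed
  have pjge: "j \<le> pj j" for j using assms(2) by (simp add: strict_mono_imp_increasing)
  have qlim: "filterlim q at_top sequentially"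
    unfolding filterlim_at_top
  proof
    fix z :: nat
    show "\<forall>\<^sub>F n in sequentially. z \<le> q n"
      unfolding eventually_sequentially
    proof (intro exI allI impI)
      fix n assume "pj z \<le> n"
      then have "q (pj z) \<le> q n" by (rule qmono)
      then show "z \<le> q n" using qpj[of z] pjge[of z] by simp
    qed
  qed
  define m where "m p = g (real (q p))" for p
  have m1: "m p \<ge> 1" for p unfolding m_def by (rule g1) simp
  have mlim: "filterlim m at_top sequentially"
    unfolding m_def
    by (rule filterlim_compose[OF glim filterlim_compose[OF filterlim_real_sequentially qlim]])
  have mmono: "m a \<le> m b" if "a \<le> b" for a b
    unfolding m_def using qmono[OF that] by (intro gmono) auto
  define M where "M p = (\<Prod>i<p. m i)" for p
  have Mpos: "M p > 0" for p unfolding M_def using m1 by (intro prod_pos) (auto intro: less_le_trans[OF zero_less_one])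
  have Msuc: "M (Suc p) = M p * m p" for p unfolding M_def by simp
  have quot: "M (Suc p) / M p = m p" for p using Mpos[of p] Msuc[of p] by simp
  have lc: "(M p)\<^sup>2 \<le> M (p - 1) * M (p + 1)" if "p \<ge> 1" for p
  proof -
    define k where "k = p - 1"
    have k: "p = Suc k" using that unfolding k_def by simp
    have "(M p)\<^sup>2 = (M k)\<^sup>2 * (m k * m k)" using k Msuc by (simp add: power2_eq_square)
    also have "\<dots> \<le> (M k)\<^sup>2 * (m k * m (Suc k))"
      using mmono[of k "Suc k"] m1[of k] by (intro mult_left_mono) auto
    also have "\<dots> = M (p - 1) * M (p + 1)" using k Msuc by (simp add: power2_eq_square)
    finally show ?thesis .
  qed
  have "weight_sequence M"
  proof -
    have "M 0 = 1" unfolding M_def by simp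
    moreover have "filterlim (\<lambda>p. M (Suc p) / M p) at_top sequentially"
      unfolding quot by (rule mlim)
    ultimately show ?thesis unfolding weight_sequence_def using Mpos lc by blast
  qed
  moreover have "\<forall>p. M (Suc p) / M p \<le> g (real p)"
    using qle by (auto simp: quot m_def intro: gmono)
  moreover have "\<forall>j. M (Suc (pj j)) / M (pj j) = g (real (pj j))"
    by (simp add: quot m_def qpj)
  ultimately show ?thesis by blast
qed

end
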